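(* Let $n\ge1$ be an integer, $p\in(0,1)$, $q:=1-p$, and suppose $n\le\frac pq\cdot\frac1{u_{**}}$, where $u_{**}:=\frac{u_*}{1-u_*}$ and $u_*$ is the unique solution in $(0,1)$ of $\ln\frac{1-u}{-\ln u}-1-\frac12\frac{(1+u)\ln u}{1-u}=0$. Define $\tilde Q(x):=Q_n^{\mathrm{LC}}(x)$ for $x\le n$ and $\tilde Q(x):=q_{n-1}^{\,n-x}q_n^{\,x-n+1}$ for $x\ge n-1$ (the two expressions agree on $[n-1,n]$). Then for all $x\in[n,n+\frac12]$, $$Q_n^{\mathrm{Lin}}\Big(x+\frac12\Big)\le\tilde Q(x).$$
   Context: $B_n$ is binomial with parameters $n,p$; $Q_n(x):=\mathbf{P}(B_n\ge x)$ and $q_j:=Q_n(j)$ for $j\in\mathbb{Z}$; $Q_n^{\mathrm{LC}}$ is the least log-concave majorant of $Q_n$ on $\mathbb{R}$ (smallest $g\ge Q_n$ with $g\ge0$ and $\ln g$ concave, values $-\infty$ allowed); $Q_n^{\mathrm{Lin}}$ is the linear interpolation of $Q_n$ over $\mathbb{Z}$: $Q_n^{\mathrm{Lin}}(x)=(1-(x-j))q_j+(x-j)q_{j+1}$ for $j\le x\le j+1$, $j\in\mathbb{Z}$. *)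

theory Defs
  imports "HOL-Probability.Probability"
begin

definition binom_tail :: "nat \<Rightarrow> real \<Rightarrow> real \<Rightarrow> real" where
  "binom_tail n p x = measure_pmf.prob (binomial_pmf n p) {k. real k \<ge> x}"

definition qseq :: "nat \<Rightarrow> real \<Rightarrow> int \<Rightarrow> real" where
  "qseq n p j = binom_tail n p (real_of_int j)"

text \<open>Log-concavity of a nonnegative function (ln g concave, value -infinity allowed):
  g((1-t)x+ty) >= g(x)^(1-t) g(y)^t for t in (0,1).\<close>
definition log_concave_fun :: "(real \<Rightarrow> real) \<Rightarrow> bool" where
  "log_concave_fun g \<longleftrightarrow> (\<forall>x. g x \<ge> 0) \<and>
     (\<forall>x y t. 0 < t \<and> t < 1 \<longrightarrow> g ((1 - t) * x + t * y) \<ge> g x powr (1 - t) * g y powr t)"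

definition binom_tail_LC :: "nat \<Rightarrow> real \<Rightarrow> real \<Rightarrow> real" where
  "binom_tail_LC n p x =
     Inf {g x | g. log_concave_fun g \<and> (\<forall>y. g y \<ge> binom_tail n p y)}"

definition binom_tail_Lin :: "nat \<Rightarrow> real \<Rightarrow> real \<Rightarrow> real" where
  "binom_tail_Lin n p x =
     (let j = \<lfloor>x\<rfloor> in (1 - (x - of_int j)) * qseq n p j + (x - of_int j) * qseq n p (j + 1))"

definition u_star :: real where
  "u_star = (THE u. 0 < u \<and> u < 1 \<and>
      ln ((1 - u) / (- ln u)) - 1 - (1/2) * ((1 + u) * ln u / (1 - u)) = 0)"

definition u_star2 :: real where
  "u_star2 = u_star / (1 - u_star)"

definition Qtilde :: "nat \<Rightarrow> real \<Rightarrow> real \<Rightarrow> real" where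
  "Qtilde n p x = (if x \<le> real n then binom_tail_LC n p x
     else qseq n p (int n - 1) powr (real n - x) * qseq n p (int n) powr (x - real n + 1))"

end

theory Submission imports Defs begin

lemma qseq_n:
  assumes "0 < p" "p < 1"
  shows "qseq n p (int n) = p ^ n"
proof -
  have "qseq n p (int n) = measure_pmf.prob (binomial_pmf n p) ({k. real n \<le> real k} \<inter> set_pmf (binomial_pmf n p))"
    unfolding qseq_def binom_tail_def by (simp add: measure_Int_set_pmf)
  also have "{k. real n \<le> real k} \<inter> set_pmf (binomial_pmf n p) = {n}"
    using assms by auto
  also have "measure_pmf.prob (binomial_pmf n p) {n} = p ^ n"
    using assms by (simp add: measure_pmf_single)
  finally show ?thesis .
qed

lemma qseq_n1:
  assumes "0 < p" "p < 1"
  shows "qseq n p (int n + 1) = 0"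
proof -
  have "qseq n p (int n + 1) = measure_pmf.prob (binomial_pmf n p) ({k. real n + 1 \<le> real k} \<inter> set_pmf (binomial_pmf n p))"
    unfolding qseq_def binom_tail_def by (simp add: measure_Int_set_pmf)
  also have "{k. real n + 1 \<le> real k} \<inter> set_pmf (binomial_pmf n p) = {}"
    using assms by auto
  finally show ?thesis by simp
qed

lemma qseq_nm1:
  assumes "0 < p" "p < 1" "n \<ge> 1"
  shows "qseq n p (int n - 1) = p ^ n + real n * p ^ (n - 1) * (1 - p)"
proof -
  have "qseq n p (int n - 1) = measure_pmf.prob (binomial_pmf n p) ({k. real n - 1 \<le> real k} \<inter> set_pmf (binomial_pmf n p))"
    unfolding qseq_def binom_tail_def measure_Int_set_pmf using assms by simp
  also have "{k. real n - 1 \<le> real k} \<inter> set_pmf (binomial_pmf n p) = {n - 1, n}"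
    using assms by auto
  also have "measure_pmf.prob (binomial_pmf n p) {n - 1, n} = pmf (binomial_pmf n p) (n - 1) + pmf (binomial_pmf n p) n"
    using assms by (subst measure_measure_pmf_finite) auto
  also have "\<dots> = p ^ n + real n * p ^ (n - 1) * (1 - p)"
    using assms binomial_symmetric[of 1 n] by simp
  finally show ?thesis .
qed


lemma exp_lower6:
  fixes x :: real assumes "x \<noteq> 0"
  shows "exp x > 1 + x + x^2/2 + x^3/6 + x^4/24 + x^5/120"
proof -
  obtain t where t: "exp x = (\<Sum>m<6. (x ^ m) / fact m) + (exp t / fact 6) * x ^ 6"
    using Maclaurin_exp_lt[of x 6] assms by auto
  have "x ^ 6 > 0" using assms by (simp add: zero_less_power_eq)
  hence "(exp t / fact 6) * x ^ 6 > 0" by simp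
  moreover have "(\<Sum>m<6. (x ^ m) / fact m) = 1 + x + x^2/2 + x^3/6 + x^4/24 + x^5/120"
    by (simp add: eval_nat_numeral fact_numeral)
  ultimately show ?thesis using t by linarith
qed

definition hh :: "real \<Rightarrow> real" where
  "hh L = ln (1 - exp (-L)) - ln L - 1 + L/2 + L/(exp L - 1)"

lemma F_hh:
  fixes u :: real assumes "0 < u" "u < 1"
  shows "ln ((1 - u) / (- ln u)) - 1 - (1/2) * ((1 + u) * ln u / (1 - u)) = hh (- ln u)"
proof -
  define L where "L = - ln u"
  have L: "L > 0" using assms by (simp add: L_def)
  have u: "u = exp (-L)" using assms by (simp add: L_def)
  have E: "exp L = 1 / u" using u assms by (simp add: exp_minus inverse_eq_divide)
  have "ln ((1 - u) / L) = ln (1 - u) - ln L" using assms L by (simp add: ln_div)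
  moreover have "- (1/2) * ((1 + u) * (-L) / (1 - u)) = L/2 + L/(1/u - 1)"
    using assms by (simp add: field_simps)
  ultimately show ?thesis unfolding hh_def L_def[symmetric] E u[symmetric]
    by (simp add: L_def)
qed

lemma hh_neg:
  assumes "0 < L" "L \<le> 5/2"
  shows "hh L < 0"
proof -
  define E where "E = exp L"
  define m where "m = exp (-L)"
  have Epos: "E > 1" using assms by (simp add: E_def)
  have mE: "m = 1 / E" by (simp add: m_def E_def exp_minus inverse_eq_divide)
  have m01: "0 < m" "m < 1" using assms by (auto simp: m_def)
  have mlow: "m > 1 - L + L^2/2 - L^3/6 + L^4/24 - L^5/120"
    using exp_lower6[of "-L"] assms by (simp add: m_def)
  have Elow: "E > 1 + L + L^2/2 + L^3/6 + L^4/24 + L^5/120"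
    using exp_lower6[of "L"] assms by (simp add: E_def)
  define A where "A = L^2/6 - L^3/24 + L^4/120"
  define D where "D = 1 + L/2 + L^2/6 + L^3/24 + L^4/120"
  have Dpos: "D > 0" using assms unfolding D_def by (intro add_pos_nonneg; simp)+
  have h1: "ln (1 - m) - ln L \<le> (1 - m) / L - 1"
    using ln_le_minus_one[of "(1 - m)/L"] m01 assms by (simp add: ln_div)
  have h2: "(1 - m) / L < 1 - L/2 + A"
  proof -
    have "1 - m < L * (1 - L/2 + A)" using mlow by (simp add: A_def algebra_simps power_def)
    thus ?thesis using assms by (simp add: divide_less_eq mult.commute)
  qed
  have h3: "L / (E - 1) < 1 / D"
  proof -
    have "E - 1 > L * D" using Elow by (simp add: D_def algebra_simps power_def)
    thus ?thesis using assms Dpos Epos by (simp add: divide_simps mult.commute)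
  qed
  have h4: "D * (1 - A) > 1"
  proof -
    have eq: "D * (1 - A) - 1 = L * (1/2 - L^3/144 - L^4/240 - L^5/960 - L^7/14400)"
      by (simp add: D_def A_def algebra_simps power_def)
    have "L^3 \<le> 125/8" using power_mono[of L "5/2" 3] assms by (simp add: power_divide)
    moreover have "L^4 \<le> 625/16" using power_mono[of L "5/2" 4] assms by (simp add: power_divide)
    moreover have "L^5 \<le> 3125/32" using power_mono[of L "5/2" 5] assms by (simp add: power_divide)
    moreover have "L^7 \<le> 78125/128" using power_mono[of L "5/2" 7] assms by (simp add: power_divide)
    ultimately have "1/2 - L^3/144 - L^4/240 - L^5/960 - L^7/14400 > 0" by linarith
    hence "L * (1/2 - L^3/144 - L^4/240 - L^5/960 - L^7/14400) > 0" using assms by simp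
    thus ?thesis using eq by linarith
  qed
  have h5: "1 / D < 1 - A" using h4 Dpos by (simp add: divide_simps mult.commute)
  have "hh L = (ln (1 - m) - ln L) - 1 + L/2 + L/(E - 1)"
    by (simp add: hh_def m_def E_def)
  also have "\<dots> < 0" using h1 h2 h3 h5 by linarith
  finally show ?thesis .
qed


definition hh' :: "real \<Rightarrow> real" where
  "hh' L = exp (-L) / (1 - exp (-L)) - 1 / L + 1/2 + ((exp L - 1) - L * exp L) / (exp L - 1)^2"

lemma hh_deriv:
  assumes "L > 0"
  shows "(hh has_real_derivative hh' L) (at L)"
proof -
  have e1: "exp L - 1 > 0" "1 - exp (-L) > 0" using assms by auto
  have "((\<lambda>L. ln (1 - exp (-L)) - ln L - 1 + L/2 + L/(exp L - 1)) has_real_derivative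
    (exp (-L) / (1 - exp (-L)) - 1 / L + 1/2 + ((exp L - 1) - L * exp L) / (exp L - 1)^2)) (at L)"
    apply (rule derivative_eq_intros refl | use assms e1 in force)+
    using assms e1 by (simp add: field_simps power2_eq_square)
  thus ?thesis unfolding hh_def[abs_def] hh'_def by simp
qed

lemma hh'_pos:
  assumes "L \<ge> 5/2"
  shows "hh' L > 0"
proof -
  define E where "E = exp L"
  have L0: "L > 0" using assms by simp
  have Elow: "E > 1 + L + L^2/2 + L^3/6 + L^4/24 + L^5/120"
    using exp_lower6[of "L"] L0 by (simp add: E_def)
  define P where "P = 1 + L + L^2/2 + L^3/6 + L^4/24"
  have L5: "L^5/120 > 0" using L0 by simp
  have EP: "E \<ge> P" using Elow L5 unfolding P_def by linarith
  have P1: "P \<ge> 1 + L" using L0 unfolding P_def by (simp add: add_nonneg_nonneg)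
  have E1: "E > 1" using L0 by (simp add: E_def)
  define K where "K = (L - 2) * (E - 1)^2 + 4 * L * (E - 1) - 2 * L^2 * E"
  define KP where "KP = (L - 2) * (P - 1)^2 + 4 * L * (P - 1) - 2 * L^2 * P"
  have "K - KP = (E - P) * (L - 2) * (E + P - 2 - 2 * L)"
    unfolding K_def KP_def by (simp add: algebra_simps power2_eq_square)
  moreover have "(E - P) * (L - 2) * (E + P - 2 - 2 * L) \<ge> 0"
    using EP P1 assms by (intro mult_nonneg_nonneg) auto
  ultimately have KKP: "K \<ge> KP" by linarith
  define s where "s = L - 5/2"
  have s0: "s \<ge> 0" using assms by (simp add: s_def)
  have Ls: "L = 5/2 + s" by (simp add: s_def)
  have br: "- 1 - L/2 - L^2/12 + L^3/36 + L^4/24 + L^5/96 + L^6/576 > 0"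
  proof -
    have "- 1 - L/2 - L^2/12 + L^3/36 + L^4/24 + L^5/96 + L^6/576 =
       26981/36864 + (16159/3072) * s + (13309/3072) * s^2 + (629/384) * s^3
       + (257/768) * s^4 + (7/192) * s^5 + (1/576) * s^6"
      unfolding Ls by (simp add: eval_nat_numeral field_simps)
    also have "\<dots> > 0" using s0 by (intro add_pos_nonneg; simp)+
    finally show ?thesis .
  qed
  have "KP = L^3 * (- 1 - L/2 - L^2/12 + L^3/36 + L^4/24 + L^5/96 + L^6/576)"
    unfolding KP_def P_def by (simp add: eval_nat_numeral field_simps)
  hence "KP > 0" using br L0 by simp
  hence Kpos: "K > 0" using KKP by linarith
  have Ene: "E - 1 \<noteq> 0" "L \<noteq> 0" "E \<noteq> 0" using E1 L0 by auto
  have x1: "exp (-L) / (1 - exp (-L)) = 1/(E-1)"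
    using Ene by (simp add: exp_minus E_def[symmetric] field_simps)
  have "hh' L = 1/(E-1) - 1/L + 1/2 + ((E-1) - L*E)/(E-1)^2"
    unfolding hh'_def x1 E_def by simp
  also have "\<dots> = K / (2 * L * (E - 1)^2)"
  proof -
    have "(E-1)^2 \<noteq> 0" using Ene by simp
    then show ?thesis using Ene unfolding K_def
      apply (simp add: divide_simps)
      apply (simp add: algebra_simps power2_eq_square)
      done
  qed
  finally have "hh' L = K / (2 * L * (E - 1)^2)" .
  thus ?thesis using Kpos E1 L0 by simp
qed


lemma hh_mono:
  assumes "5/2 \<le> a" "a < b"
  shows "hh a < hh b"
  using assms(2)
proof (rule DERIV_pos_imp_increasing)
  fix x assume "a \<le> x" "x \<le> b"
  hence "x \<ge> 5/2" using assms by linarith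
  thus "\<exists>y. DERIV hh x :> y \<and> y > 0"
    using hh_deriv[of x] hh'_pos[of x] by auto
qed

lemma hh_16: "hh 16 > 0"
proof -
  have "exp (4::real) > 16"
    using exp_lower6[of 4] by simp
  hence l16: "ln (16::real) < 4"
    by (metis exp_gt_zero exp_less_cancel_iff exp_ln zero_less_numeral)
  have "exp (16::real) \<ge> 2" using exp_ge_add_one_self[of 16] by simp
  hence "exp (-16::real) \<le> 1/2" by (simp add: exp_minus divide_simps)
  hence "ln (1 - exp (-16::real)) \<ge> ln (1/2)"
    by (subst ln_le_cancel_iff) auto
  moreover have "ln (1/2::real) = - ln 2" by (simp add: ln_div)
  moreover have "ln (2::real) < 1" by (rule ln_2_less_1)
  moreover have "16 / (exp 16 - 1) \<ge> (0::real)" using \<open>exp (16::real) \<ge> 2\<close> by simp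
  ultimately show ?thesis unfolding hh_def using l16 by linarith
qed

lemma hh_cont: "continuous_on {a..b} hh" if "a > 0"
proof -
  have "\<forall>x\<in>{a..b}. isCont hh x"
  proof
    fix x assume "x \<in> {a..b}"
    hence "x > 0" using that by auto
    thus "isCont hh x" using hh_deriv[of x] by (rule_tac DERIV_isCont) auto
  qed
  thus ?thesis by (rule continuous_at_imp_continuous_on)
qed

definition Fu :: "real \<Rightarrow> real" where
  "Fu u = ln ((1 - u) / (- ln u)) - 1 - (1/2) * ((1 + u) * ln u / (1 - u))"

lemma root_props:
  assumes "0 < u" "u < 1" "Fu u = 0"
  shows "hh (- ln u) = 0" "- ln u > 5/2"
proof -
  show h: "hh (- ln u) = 0" using F_hh[OF assms(1,2)] assms(3) by (simp add: Fu_def)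
  have "- ln u > 0" using assms by simp
  thus "- ln u > 5/2" using hh_neg[of "- ln u"] h by force
qed

lemma ex1_root: "\<exists>!u. 0 < u \<and> u < 1 \<and> Fu u = 0"
proof -
  obtain L where L: "5/2 \<le> L" "L \<le> 16" "hh L = 0"
    using IVT'[of hh "5/2" 0 16] hh_neg[of "5/2"] hh_16 hh_cont[of "5/2" 16] by auto
  define u where "u = exp (-L)"
  have u: "0 < u" "u < 1" using L by (auto simp: u_def)
  have "Fu u = 0" using F_hh[OF u] L by (simp add: Fu_def u_def)
  moreover have "v = u" if v: "0 < v" "v < 1" "Fu v = 0" for v
  proof -
    have a: "hh (- ln v) = 0" "- ln v > 5/2" using root_props[OF v] by auto
    have b: "hh (- ln u) = 0" "- ln u > 5/2" using root_props[OF u] \<open>Fu u = 0\<close> by auto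
    have "- ln v = - ln u"
    proof (rule ccontr)
      assume "- ln v \<noteq> - ln u"
      hence "- ln v < - ln u \<or> - ln u < - ln v" by linarith
      thus False using hh_mono a b by (metis less_eq_real_def less_irrefl)
    qed
    thus ?thesis using u v by simp
  qed
  ultimately show ?thesis using u by blast
qed

lemma u_star_props:
  "0 < u_star" "u_star < 1" "2 + 2 * ln (- ln u_star) \<ge> - ln u_star"
proof -
  have P: "0 < u_star \<and> u_star < 1 \<and> Fu u_star = 0"
    unfolding u_star_def using theI'[OF ex1_root] by (simp add: Fu_def)
  thus "0 < u_star" "u_star < 1" by auto
  define L where "L = - ln u_star"
  have h: "hh L = 0" "L > 5/2" using root_props[of u_star] P by (auto simp: L_def)
  define m where "m = exp (-L)"
  have m01: "0 < m" "m < 1" using h by (auto simp: m_def)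
  have mE: "exp L = 1 / m" by (simp add: m_def exp_minus inverse_eq_divide)
  have lnL: "ln L = ln (1 - m) - 1 + L/2 + L * m / (1 - m)"
    using h(1) m01 unfolding hh_def m_def[symmetric] mE by (simp add: field_simps)
  have "ln (1 / (1 - m)) \<le> 1 / (1 - m) - 1" using m01 by (intro ln_le_minus_one) auto
  hence "- ln (1 - m) \<le> m / (1 - m)" using m01 by (simp add: ln_div field_simps)
  moreover have "L * m / (1 - m) \<ge> m / (1 - m)" using h m01 by (simp add: divide_right_mono)
  ultimately show "2 + 2 * ln (- ln u_star) \<ge> - ln u_star"
    unfolding L_def[symmetric] using lnL by linarith
qed


lemma key_exp:
  fixes L t :: real
  assumes "L > 0" "2 + 2 * ln L \<ge> L" "t \<ge> 0"
  shows "1/2 - t \<le> exp (- L * t)"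
proof -
  have e: "exp (- L * t) = (1 / L) * exp (ln L - L * t)"
    using assms by (simp add: exp_diff exp_minus field_simps)
  have "exp (ln L - L * t) \<ge> 1 + (ln L - L * t)" by (rule exp_ge_add_one_self)
  hence "(1 / L) * exp (ln L - L * t) \<ge> (1 / L) * (1 + (ln L - L * t))"
    using assms by (intro mult_left_mono) auto
  moreover have "(1 / L) * (1 + (ln L - L * t)) = (1 + ln L) / L - t"
    using assms by (simp add: field_simps)
  moreover have "(1 + ln L) / L \<ge> 1/2" using assms by (simp add: field_simps)
  ultimately show ?thesis using e by linarith
qed

lemma LC_ge:
  assumes "0 < p" "p < 1"
  shows "binom_tail n p y \<le> binom_tail_LC n p y"
proof -
  let ?S = "{g y | g. log_concave_fun g \<and> (\<forall>y. g y \<ge> binom_tail n p y)}"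
  have "log_concave_fun (\<lambda>_. 1)" unfolding log_concave_fun_def by simp
  moreover have "\<forall>y. (1::real) \<ge> binom_tail n p y"
    unfolding binom_tail_def by (simp add: measure_pmf.prob_le_1)
  ultimately have "(1::real) \<in> ?S" by (auto intro!: exI[of _ "\<lambda>_. 1::real"])
  hence ne: "?S \<noteq> {}" by blast
  show ?thesis unfolding binom_tail_LC_def
    by (rule cInf_greatest[OF ne]) auto
qed

lemma case2:
  fixes n :: nat and p x :: real
  assumes "n \<ge> 1" and "0 < p" and "p < 1"
    and "real n \<le> (p / (1 - p)) * (1 / u_star2)"
    and "real n < x" and "x < real n + 1/2"
  shows "binom_tail_Lin n p (x + 1/2) \<le> Qtilde n p x"
proof -
  have qn: "qseq n p (int n) = p ^ n" using qseq_n assms by auto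
  have qn1: "qseq n p (int n + 1) = 0" using qseq_n1 assms by auto
  have pn: "p ^ n > 0" using assms by simp
    define t where "t = x - real n"
  have t: "0 < t" "t < 1/2" using assms(5,6) by (auto simp: t_def)
  have fl: "\<lfloor>x + 1/2\<rfloor> = int n" using assms(5,6) by (simp add: floor_eq_iff)
  have lin: "binom_tail_Lin n p (x + 1/2) = (1/2 - t) * p ^ n"
    unfolding binom_tail_Lin_def Let_def fl using qn qn1 by (simp add: t_def)
  define a where "a = qseq n p (int n - 1)"
  have a: "a = p ^ (n - 1) * (p + real n * (1 - p))"
    unfolding a_def using qseq_nm1[of p n] assms
    by (simp add: algebra_simps power_eq_if)
  have apos: "a > 0" unfolding a using assms by (intro mult_pos_pos add_pos_nonneg) auto
  define r where "r = p / (p + real n * (1 - p))"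
  have rpos: "r > 0" unfolding r_def using assms by (intro divide_pos_pos add_pos_nonneg) auto
  have ra: "p ^ n / a = r"
  proof -
    have "p ^ n = p ^ (n - 1) * p" using assms by (simp add: power_eq_if)
    moreover have c: "p ^ (n - 1) \<noteq> 0" using assms by simp
    ultimately have "p ^ n / a = (p ^ (n - 1) * p) / (p ^ (n - 1) * (p + real n * (1 - p)))"
      unfolding a by simp
    also have "\<dots> = r" unfolding r_def by (rule nonzero_mult_divide_mult_cancel_left[OF c])
    finally show ?thesis .
  qed
  have Q: "Qtilde n p x = a powr (- t) * (p ^ n) powr (1 + t)"
    unfolding Qtilde_def a_def using assms(5,6) qn by (simp add: t_def add.commute)
  also have "\<dots> = p ^ n * (p ^ n / a) powr t"
    using apos pn by (simp add: powr_add powr_minus powr_divide field_simps)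
  also have "\<dots> = p ^ n * r powr t" using ra by simp
  finally have Qeq: "Qtilde n p x = p ^ n * r powr t" .
  define u where "u = u_star"
  have u: "0 < u" "u < 1" "2 + 2 * ln (- ln u) \<ge> - ln u" using u_star_props by (auto simp: u_def)
  define L where "L = - ln u"
  have L: "L > 0" "2 + 2 * ln L \<ge> L" using u by (auto simp: L_def)
  have "real n \<le> (p / (1 - p)) * (1 / (u / (1 - u)))" using assms(4) by (simp add: u_star2_def u_def)
  hence "real n \<le> p * (1 - u) / ((1 - p) * u)" using u assms by (simp add: field_simps)
  hence "real n * ((1 - p) * u) \<le> p * (1 - u)" using u assms by (simp add: field_simps)
  hence "u * (p + real n * (1 - p)) \<le> p" by (simp add: algebra_simps)
  moreover have dpos: "p + real n * (1 - p) > 0" using assms by (intro add_pos_nonneg) auto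
  ultimately have ur: "u \<le> r" unfolding r_def by (simp add: le_divide_eq)
  have "ln r \<ge> ln u" using ur u by simp
  hence "ln r \<ge> - L" by (simp add: L_def)
  hence "t * ln r \<ge> - L * t" using mult_left_mono[of "-L" "ln r" t] t by (simp add: mult.commute)
  hence "r powr t \<ge> exp (- L * t)" using rpos by (simp add: powr_def)
  moreover have "1/2 - t \<le> exp (- L * t)" using key_exp L t by simp
  ultimately have "1/2 - t \<le> r powr t" by linarith
  thus ?thesis using lin Qeq pn by simp
qed

theorem lemma3p6:
  fixes n :: nat and p x :: real
  assumes "n \<ge> 1" and "0 < p" and "p < 1"
    and "real n \<le> (p / (1 - p)) * (1 / u_star2)"
    and "real n \<le> x" and "x \<le> real n + 1/2"
  shows "binom_tail_Lin n p (x + 1/2) \<le> Qtilde n p x"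
proof -
  have qn: "qseq n p (int n) = p ^ n" using qseq_n assms by auto
  have qn1: "qseq n p (int n + 1) = 0" using qseq_n1 assms by auto
  have pn: "p ^ n > 0" using assms by simp
  consider "x = real n" | "real n < x" "x < real n + 1/2" | "x = real n + 1/2"
    using assms by linarith
  thus ?thesis
  proof cases
    case 1
    have fl: "\<lfloor>real n + 1/2\<rfloor> = int n" by (simp add: floor_eq_iff)
    have "binom_tail_Lin n p (x + 1/2) = p ^ n / 2"
      unfolding binom_tail_Lin_def 1 Let_def fl using qn qn1 by simp
    also have "\<dots> \<le> binom_tail n p (real n)" using qn pn unfolding qseq_def by simp
    also have "\<dots> \<le> Qtilde n p x" unfolding Qtilde_def 1 using LC_ge assms by simp
    finally show ?thesis .
  next
    case 3
    have fl: "\<lfloor>real n + 1/2 + 1/2\<rfloor> = int n + 1" by (simp add: floor_eq_iff)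
    have "binom_tail_Lin n p (x + 1/2) = 0"
      unfolding binom_tail_Lin_def 3 Let_def fl using qn1 by simp
    also have "0 \<le> Qtilde n p x" unfolding Qtilde_def 3 by simp
    finally show ?thesis .
  next
    case 2
    thus ?thesis using case2 assms by blast
  qed
qed

end
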